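(* For any $x\in\mathrm{St}(d,r)^\epsilon$ and $x'=\mathrm{Proj}_{\mathrm{St}}(x)$, we have $\langle\nabla\mathcal{L}(x'),x-x'\rangle=0$.
   Context: $\langle A,B\rangle=\mathrm{Tr}(AB^\top)$; $\mathrm{sym}(A)=\frac12(A+A^\top)$; $\|\cdot\|_F$ Frobenius norm. $\mathrm{St}(d,r)=\{x\in\mathbb{R}^{d\times r}:x^\top x=I_r\}$; for $\epsilon\in(0,3/4)$, $\mathrm{St}(d,r)^\epsilon=\{x:\|x^\top x-I_r\|_F\le\epsilon\}$. $\mathrm{Proj}_{\mathrm{St}}(x)$ is the Frobenius-norm projection of $x$ onto $\mathrm{St}(d,r)$ (for $x$ of full column rank with thin SVD $x=USV^\top$ it equals $UV^\top$). $f:\mathbb{R}^{d\times r}\to\mathbb{R}$ is $C^2$, $\gamma>0$, and the merit function is $\mathcal{L}(x)=f(x)-\frac12\langle\mathrm{sym}(x^\top\nabla f(x)),x^\top x-I_r\rangle+\frac\gamma4\|x^\top x-I_r\|_F^2$. *)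

theory Defs
  imports "HOL-Analysis.Analysis"
begin

text \<open>Matrices in R^{d x r} are represented as real^'r^'d (rows indexed by 'd,
columns by 'r). The Euclidean inner product on real^'r^'d is
sum_i sum_j A_ij B_ij = Tr(A B^T), and norm is the Frobenius norm.\<close>

definition grad :: "('a::real_inner \<Rightarrow> real) \<Rightarrow> 'a \<Rightarrow> 'a" where
  "grad f x = (THE g. (f has_derivative (\<lambda>h. g \<bullet> h)) (at x))"

definition C2 :: "('a::euclidean_space \<Rightarrow> real) \<Rightarrow> bool" where
  "C2 f \<longleftrightarrow> (\<exists>G H. (\<forall>x. (f has_derivative (\<lambda>h. G x \<bullet> h)) (at x)) \<and>
                  (\<forall>x. (G has_derivative blinfun_apply (H x)) (at x)) \<and>
                  continuous_on UNIV H)"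

definition msym :: "real^'r^'r \<Rightarrow> real^'r^'r" where
  "msym A = (1/2) *\<^sub>R (A + transpose A)"

definition Stiefel :: "(real^'r^'d) set" where
  "Stiefel = {x. transpose x ** x = mat 1}"

definition Stiefel_eps :: "real \<Rightarrow> (real^'r^'d) set" where
  "Stiefel_eps \<epsilon> = {x. norm (transpose x ** x - mat 1) \<le> \<epsilon>}"

definition merit :: "(real^'r^'d \<Rightarrow> real) \<Rightarrow> real \<Rightarrow> real^'r^'d \<Rightarrow> real" where
  "merit f \<gamma> x = f x - (1/2) * (msym (transpose x ** grad f x) \<bullet> (transpose x ** x - mat 1))
       + (\<gamma>/4) * (norm (transpose x ** x - mat 1))\<^sup>2"

end

theory Submission
  imports Defs
begin

lemma bb_mm: "bounded_bilinear (\<lambda>(A::real^'n^'m) (B::real^'p^'n). A ** B)"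
  unfolding bilinear_conv_bounded_bilinear[symmetric] bilinear_def
  by (auto intro!: linearI simp: vec_eq_iff matrix_matrix_mult_def sum.distrib algebra_simps sum_distrib_left)

lemma bl_tr: "bounded_linear (transpose :: real^'n^'m \<Rightarrow> real^'m^'n)"
  unfolding linear_conv_bounded_linear[symmetric]
  by (auto intro!: linearI simp: vec_eq_iff transpose_def)

lemma sum3_swap: "(\<Sum>i\<in>A. \<Sum>j\<in>B. \<Sum>k\<in>C. f i j k) = (\<Sum>j\<in>B. \<Sum>k\<in>C. \<Sum>i\<in>A. f i j k)"
proof -
  have "(\<Sum>i\<in>A. \<Sum>j\<in>B. \<Sum>k\<in>C. f i j k) = (\<Sum>j\<in>B. \<Sum>i\<in>A. \<Sum>k\<in>C. f i j k)" by (rule sum.swap)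
  also have "\<dots> = (\<Sum>j\<in>B. \<Sum>k\<in>C. \<Sum>i\<in>A. f i j k)" by (rule sum.cong[OF refl], rule sum.swap)
  finally show ?thesis .
qed

lemma inner_mm1: "((A::real^'n^'m) ** (B::real^'p^'n)) \<bullet> C = B \<bullet> (transpose A ** C)"
proof -
  have "((A::real^'n^'m) ** (B::real^'p^'n)) \<bullet> C = (\<Sum>i\<in>UNIV. \<Sum>k\<in>UNIV. \<Sum>j\<in>UNIV. A$i$j * B$j$k * C$i$k)"
    unfolding inner_vec_def matrix_matrix_mult_def by (simp add: sum_distrib_right)
  also have "\<dots> = (\<Sum>i\<in>UNIV. \<Sum>j\<in>UNIV. \<Sum>k\<in>UNIV. A$i$j * B$j$k * C$i$k)"
    by (rule sum.cong[OF refl], rule sum.swap)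
  also have "\<dots> = (\<Sum>j\<in>UNIV. \<Sum>i\<in>UNIV. \<Sum>k\<in>UNIV. A$i$j * B$j$k * C$i$k)"
    by (rule sum.swap)
  also have "\<dots> = (\<Sum>j\<in>UNIV. \<Sum>k\<in>UNIV. \<Sum>i\<in>UNIV. A$i$j * B$j$k * C$i$k)"
    by (rule sum.cong[OF refl], rule sum.swap)
  also have "\<dots> = B \<bullet> (transpose A ** C)"
    unfolding inner_vec_def matrix_matrix_mult_def transpose_def by (simp add: sum_distrib_left mult_ac)
  finally show ?thesis .
qed

lemma inner_tr: "transpose (A::real^'n^'m) \<bullet> transpose B = A \<bullet> B"
  unfolding inner_vec_def transpose_def
  by (simp, subst sum.swap, simp)

lemma tr_msym: "transpose (msym A) = msym A"
  by (simp add: msym_def vec_eq_iff transpose_def)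

lemma stiefel_norm2: assumes "z \<in> Stiefel" shows "z \<bullet> (z::real^'r^'d) = real CARD('r)"
proof -
  have e: "(\<Sum>m\<in>UNIV. z$m$a * z$m$a) = 1" for a
    using arg_cong[OF assms[unfolded Stiefel_def, simplified], of "\<lambda>M. M$a$a"]
    by (simp add: matrix_matrix_mult_def transpose_def mat_def)
  have "z \<bullet> z = (\<Sum>m\<in>UNIV. \<Sum>a\<in>UNIV. z$m$a * z$m$a)" by (simp add: inner_vec_def)
  also have "\<dots> = (\<Sum>a\<in>UNIV. \<Sum>m\<in>UNIV. z$m$a * z$m$a)" by (rule sum.swap)
  also have "\<dots> = real CARD('r)" by (simp add: e)
  finally show ?thesis .
qed

lemma rot_stiefel:
  fixes x' :: "real^'r^'d"
  assumes "x' \<in> Stiefel" "i \<noteq> j" "c^2 + s^2 = 1"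
  shows "(\<chi> m. if m = i then c *\<^sub>R x'$i - s *\<^sub>R x'$j else if m = j then s *\<^sub>R x'$i + c *\<^sub>R x'$j else x'$m) \<in> Stiefel"
    (is "?z \<in> _")
proof -
  have "(transpose ?z ** ?z)$a$b = (transpose x' ** x')$a$b" for a b
  proof -
    define g where "g m = ?z$m$a * ?z$m$b" for m
    define h where "h m = x'$m$a * x'$m$b" for m
    have gh: "g m = h m" if "m \<in> UNIV - {i} - {j}" for m using that by (simp add: g_def h_def)
    have gh2: "g i + g j = h i + h j"
    proof -
      have "g i + g j = (c^2+s^2) * (x'$i$a * x'$i$b + x'$j$a * x'$j$b)"
        using assms(2) by (simp add: g_def h_def algebra_simps power2_eq_square)
      then show ?thesis using assms(3) by (simp add: h_def)
    qed
    have "sum g UNIV = g i + (g j + sum g (UNIV - {i} - {j}))"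
      using assms(2) by (simp add: sum.remove[of UNIV i] sum.remove[of "UNIV - {i}" j])
    also have "\<dots> = h i + (h j + sum h (UNIV - {i} - {j}))"
      using gh gh2 sum.cong[OF refl gh] by simp
    also have "\<dots> = sum h UNIV"
      using assms(2) by (simp add: sum.remove[of UNIV i] sum.remove[of "UNIV - {i}" j])
    finally show ?thesis by (simp add: g_def h_def matrix_matrix_mult_def transpose_def)
  qed
  then show ?thesis using assms(1) unfolding Stiefel_def by (simp add: vec_eq_iff)
qed

lemma opt_sym:
  fixes x x' :: "real^'r^'d"
  assumes st: "x' \<in> Stiefel" and mn: "\<forall>z\<in>Stiefel. norm (x - x') \<le> norm (x - z)"
  shows "x$i \<bullet> x'$j = x$j \<bullet> x'$i"
proof (cases "i = j")
  case True then show ?thesis by simp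
next
  case False
  define A where "A = x$i \<bullet> x'$i + x$j \<bullet> x'$j"
  define B where "B = x$j \<bullet> x'$i - x$i \<bullet> x'$j"
  have key: "(c - 1) * A + s * B \<le> 0" if cs: "c^2 + s^2 = 1" for c s
  proof -
    let ?z = "(\<chi> m. if m = i then c *\<^sub>R x'$i - s *\<^sub>R x'$j else if m = j then s *\<^sub>R x'$i + c *\<^sub>R x'$j else x'$m) :: real^'r^'d"
    have zs: "?z \<in> Stiefel" by (rule rot_stiefel[OF st False cs])
    have "(x - x') \<bullet> (x - x') \<le> (x - ?z) \<bullet> (x - ?z)" using mn zs norm_le by blast
    then have le: "x \<bullet> ?z \<le> x \<bullet> x'"
      using stiefel_norm2[OF zs] stiefel_norm2[OF st]
      by (simp add: inner_diff_left inner_diff_right inner_commute)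
    define g where "g m = x$m \<bullet> (?z$m - x'$m)" for m
    have g0: "g m = 0" if "m \<in> UNIV - {i} - {j}" for m using that by (simp add: g_def)
    have "x \<bullet> ?z - x \<bullet> x' = x \<bullet> (?z - x')" by (simp add: inner_diff_right)
    also have "\<dots> = sum g UNIV"
      unfolding g_def inner_vec_def[of x "?z - x'"] vector_minus_component ..
    also have "\<dots> = g i + (g j + sum g (UNIV - {i} - {j}))"
      using False by (simp add: sum.remove[of UNIV i] sum.remove[of "UNIV - {i}" j])
    also have "\<dots> = g i + g j" using sum.neutral[of "UNIV - {i} - {j}" g] g0 by simp
    also have "\<dots> = (c - 1) * A + s * B"
      using False by (simp add: g_def A_def B_def inner_diff_right inner_add_right algebra_simps)
    finally show ?thesis using le by simp
  qed
  have B0: "B = 0"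
  proof (rule ccontr)
    assume "B \<noteq> 0"
    define t where "t = B / (\<bar>A\<bar> + 1)"
    have p: "1 + t^2 > 0" by (simp add: add_pos_nonneg)
    have "((1 - t^2)/(1+t^2))^2 + (2*t/(1+t^2))^2 = 1"
    proof -
      have nz: "(1+t^2) \<noteq> 0" using p by simp
      have "((1 - t^2)/(1+t^2))^2 + (2*t/(1+t^2))^2 = ((1 - t^2)^2 + (2*t)^2) / (1+t^2)^2"
        by (simp add: power_divide add_divide_distrib)
      also have "(1 - t^2)^2 + (2*t)^2 = (1+t^2)^2" by algebra
      finally show ?thesis using nz by simp
    qed
    from key[OF this] have "((1 - t^2)/(1+t^2) - 1) * A + (2*t/(1+t^2)) * B \<le> 0" .
    moreover have "((1 - t^2)/(1+t^2) - 1) * A + (2*t/(1+t^2)) * B = (-2*t^2 * A + 2*t*B) / (1+t^2)"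
    proof -
      have nz: "(1+t^2) \<noteq> 0" using p by simp
      have "(1 - t^2)/(1+t^2) - 1 = (-2*t^2)/(1+t^2)" using nz by (simp add: field_simps)
      then show ?thesis by (simp add: add_divide_distrib diff_divide_distrib)
    qed
    ultimately have "(-2*t^2 * A + 2*t*B) / (1+t^2) \<le> 0" by simp
    then have "-2*t^2 * A + 2*t*B \<le> 0" using p unfolding divide_le_0_iff by auto
    then have "t*B \<le> t^2 * A" by simp
    moreover have "t^2 * A \<le> t^2 * \<bar>A\<bar>" by (simp add: mult_left_mono)
    moreover have "t * B = t^2 * (\<bar>A\<bar> + 1)" 
    proof -
      have g: "(B/a)*B = (B/a)^2*a" if "a \<noteq> 0" for a :: real using that by (simp add: power2_eq_square)
      have "\<bar>A\<bar> + 1 \<noteq> 0" by linarith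
      from g[OF this] show ?thesis by (simp add: t_def mult.commute)
    qed
    moreover have "t^2 > 0" using \<open>B \<noteq> 0\<close> by (simp add: t_def add_pos_nonneg)
    ultimately show False by (simp add: algebra_simps)
  qed
  then show ?thesis by (simp add: B_def)
qed


lemma decomp:
  fixes x x' :: "real^'r^'d"
  assumes st: "x' \<in> Stiefel" and mn: "\<forall>z\<in>Stiefel. norm (x - x') \<le> norm (x - z)"
  shows "\<exists>P. transpose P = P \<and> x - x' = x' ** P"
proof -
  define K where "K = x ** transpose x'"
  have Kab: "K$a$b = x$a \<bullet> x'$b" for a b
    by (simp add: K_def matrix_matrix_mult_def transpose_def inner_vec_def)
  have Ks: "transpose K = K"
    by (simp add: vec_eq_iff transpose_def Kab opt_sym[OF st mn])
  have I: "transpose x' ** x' = mat 1" using st by (simp add: Stiefel_def)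
  define N where "N = transpose x ** x'"
  have xN: "x = x' ** N"
  proof -
    have "x = x ** (transpose x' ** x')" by (simp add: I)
    also have "\<dots> = K ** x'" by (simp add: K_def matrix_mul_assoc)
    also have "\<dots> = transpose K ** x'" by (simp add: Ks)
    also have "\<dots> = x' ** N" by (simp add: K_def N_def matrix_transpose_mul matrix_mul_assoc)
    finally show ?thesis .
  qed
  have Ns: "transpose N = N"
  proof -
    have "transpose N = transpose x' ** x" by (simp add: N_def matrix_transpose_mul)
    also have "\<dots> = (transpose x' ** x') ** N" by (subst xN) (simp add: matrix_mul_assoc)
    also have "\<dots> = N" by (simp add: I)
    finally show ?thesis .
  qed
  have sd: "x' ** (N - mat 1) = x' ** N - x' ** mat 1"
    by (simp add: vec_eq_iff matrix_matrix_mult_def right_diff_distrib sum_subtractf)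
  have "x - x' = x' ** (N - mat 1)"
    unfolding sd using xN by simp
  moreover have "transpose (N - mat 1) = N - mat 1"
    using Ns by (simp add: vec_eq_iff transpose_def mat_def)
  ultimately show ?thesis by blast
qed

lemma grad_eq:
  assumes "(F has_derivative (\<lambda>h. g \<bullet> h)) (at y)"
  shows "grad F y = g"
  unfolding grad_def
proof (rule the_equality[where P="\<lambda>g. (F has_derivative (\<lambda>h. g \<bullet> h)) (at y)", OF assms])
  fix g' assume "(F has_derivative (\<lambda>h. g' \<bullet> h)) (at y)"
  from has_derivative_unique[OF assms this] have "(\<lambda>h. g \<bullet> h) = (\<lambda>h. g' \<bullet> h)" .
  then have "g \<bullet> (g - g') = g' \<bullet> (g - g')" by meson
  then have "(g - g') \<bullet> (g - g') = 0" by (simp add: inner_diff_left)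
  then show "g' = g" by simp
qed

lemma bl_msym: "bounded_linear (msym :: real^'r^'r \<Rightarrow> _)"
  unfolding linear_conv_bounded_linear[symmetric]
  by (auto intro!: linearI simp: vec_eq_iff transpose_def msym_def algebra_simps)

lemma msym_inner: "transpose P = P \<Longrightarrow> msym A \<bullet> P = A \<bullet> P"
proof -
  assume P: "transpose P = P"
  have "transpose A \<bullet> P = A \<bullet> P" using inner_tr[of A P] P by simp
  then show ?thesis by (simp add: msym_def inner_add_left)
qed


theorem lemma9:
  fixes f :: "real^'r^'d \<Rightarrow> real" and \<gamma> \<epsilon> :: real and x x' :: "real^'r^'d"
  assumes "C2 f" and "\<gamma> > 0" and "0 < \<epsilon>" and "\<epsilon> < 3/4"
    and "x \<in> Stiefel_eps \<epsilon>"
    and "x' \<in> Stiefel" and "\<forall>z\<in>Stiefel. norm (x - x') \<le> norm (x - z)"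
  shows "grad (merit f \<gamma>) x' \<bullet> (x - x') = 0"
proof -
  obtain G H where dG: "\<And>y. (f has_derivative (\<lambda>h. G y \<bullet> h)) (at y)"
    and dH: "\<And>y. (G has_derivative blinfun_apply (H y)) (at y)"
    using assms(1) unfolding C2_def by blast
  have gf: "grad f y = G y" for y by (rule grad_eq[OF dG])
  have I: "transpose x' ** x' = mat 1" using assms(6) by (simp add: Stiefel_def)
  define Bf where "Bf y = transpose y ** y - mat 1" for y :: "real^'r^'d"
  define Af where "Af y = msym (transpose y ** G y)" for y :: "real^'r^'d"
  define B' where "B' h = transpose x' ** h + transpose h ** x'" for h :: "real^'r^'d"
  define A' where "A' h = msym (transpose x' ** blinfun_apply (H x') h + transpose h ** G x')" for h :: "real^'r^'d"
  have mer: "merit f \<gamma> = (\<lambda>y. f y - (1/2) * (Af y \<bullet> Bf y) + (\<gamma>/4) * (Bf y \<bullet> Bf y))"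
    by (simp add: fun_eq_iff merit_def gf Af_def Bf_def power2_norm_eq_inner)
  have dT: "(transpose has_derivative transpose) (at y)" for y :: "real^'r^'d"
    by (rule bounded_linear_imp_has_derivative[OF bl_tr])
  have dB: "(Bf has_derivative B') (at x')"
    unfolding Bf_def[abs_def] B'_def[abs_def]
    by (rule has_derivative_diff[OF bounded_bilinear.FDERIV[OF bb_mm dT has_derivative_ident] has_derivative_const, simplified])
  have dM: "((\<lambda>y. transpose y ** G y) has_derivative (\<lambda>h. transpose x' ** blinfun_apply (H x') h + transpose h ** G x')) (at x')"
    by (rule bounded_bilinear.FDERIV[OF bb_mm dT dH])
  have dA: "(Af has_derivative A') (at x')"
    unfolding Af_def[abs_def] A'_def[abs_def]
    by (rule bounded_linear.has_derivative[OF bl_msym dM])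
  have B0: "Bf x' = 0" by (simp add: Bf_def I)
  define S where "S = Af x'"
  define g where "g = G x' - x' ** S"
  have Ss: "transpose S = S" by (simp add: S_def Af_def tr_msym)
  have dL: "(merit f \<gamma> has_derivative (\<lambda>h. g \<bullet> h)) (at x')"
    unfolding mer
  proof (rule has_derivative_eq_rhs)
    show "((\<lambda>y. f y - (1/2) * (Af y \<bullet> Bf y) + (\<gamma>/4) * (Bf y \<bullet> Bf y)) has_derivative
       (\<lambda>h. G x' \<bullet> h - (1/2) * (Af x' \<bullet> B' h + A' h \<bullet> Bf x') + (\<gamma>/4) * (Bf x' \<bullet> B' h + B' h \<bullet> Bf x'))) (at x')"
      by (intro has_derivative_add has_derivative_diff has_derivative_mult_right
          has_derivative_inner dG dA dB)
    show "(\<lambda>h. G x' \<bullet> h - (1/2) * (Af x' \<bullet> B' h + A' h \<bullet> Bf x') + (\<gamma>/4) * (Bf x' \<bullet> B' h + B' h \<bullet> Bf x')) = (\<lambda>h. g \<bullet> h)"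
    proof
      fix h
      have e1: "S \<bullet> (transpose x' ** h) = (x' ** S) \<bullet> h" by (simp add: inner_mm1)
      have e2: "S \<bullet> (transpose h ** x') = (x' ** S) \<bullet> h"
      proof -
        have "S \<bullet> (transpose h ** x') = transpose S \<bullet> transpose (transpose h ** x')" by (simp add: inner_tr)
        also have "\<dots> = S \<bullet> (transpose x' ** h)" by (simp add: Ss matrix_transpose_mul)
        finally show ?thesis using e1 by simp
      qed
      show "G x' \<bullet> h - (1/2) * (Af x' \<bullet> B' h + A' h \<bullet> Bf x') + (\<gamma>/4) * (Bf x' \<bullet> B' h + B' h \<bullet> Bf x') = g \<bullet> h"
        using e1 e2 by (simp add: B0 B'_def S_def[symmetric] inner_add_right g_def inner_diff_left)
    qed
  qed
  have gL: "grad (merit f \<gamma>) x' = g" by (rule grad_eq[OF dL])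
  obtain P where Ps: "transpose P = P" and xP: "x - x' = x' ** P"
    using decomp[OF assms(6) assms(7)] by blast
  define M0 where "M0 = transpose x' ** G x'"
  have SM: "S = msym M0" by (simp add: S_def Af_def M0_def)
  have t1: "G x' \<bullet> (x' ** P) = M0 \<bullet> P"
  proof -
    have "G x' \<bullet> (x' ** P) = (x' ** P) \<bullet> G x'" by (rule inner_commute)
    also have "\<dots> = P \<bullet> M0" by (simp add: inner_mm1 M0_def)
    also have "\<dots> = M0 \<bullet> P" by (rule inner_commute)
    finally show ?thesis .
  qed
  have t2: "(x' ** S) \<bullet> (x' ** P) = S \<bullet> P"
    by (simp add: inner_mm1 matrix_mul_assoc I)
  have t3: "S \<bullet> P = M0 \<bullet> P" by (simp add: SM msym_inner[OF Ps])
  show ?thesis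
    by (simp add: gL xP g_def inner_diff_left t1 t2 t3)
qed

end
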